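(* Let $\Omega=C_0(\mathbb{R}_+,\mathbb{R}^d)$ with the metric \[D(\omega,\omega')=\sum_{n=1}^{\infty}\frac{1}{2^n}\,\frac{\sup_{0\le t\le n}|\omega(t)-\omega'(t)|}{1+\sup_{0\le t\le n}|\omega(t)-\omega'(t)|},\] and let $\theta_t$ be the shift on $\Omega$, $\theta_t(\omega)(s)=\omega(t+s)-\omega(t)$. For $h>0$ define $\phi_P^{(h)}:\Omega\to(\mathbb{R}^d)^{\mathbb{N}^*}$, $\phi_P^{(h)}(\omega)=(\omega(nh)-\omega((n-1)h))_{n\ge1}$; $\phi_I^{(h)}:(\mathbb{R}^d)^{\mathbb{N}^*}\to\Omega$, $\phi_I^{(h)}(y)(t)=\sum_{n=0}^{\lfloor t/h\rfloor}y_n+\frac{t-\lfloor t/h\rfloor h}{h}y_{\lfloor t/h\rfloor+1}$ (with $y_0:=0$); and the sequence shift $\theta^{(h)}((y_n)_{n\ge1})=(y_{n+1})_{n\ge1}$. For $t\ge0$ define $\overline{\theta}^{(h)}_t:\Omega\to\Omega$ by \[\overline{\theta}^{(h)}_t(\omega)=\frac{(\lfloor t/h\rfloor+1)h-t}{h}\,\phi_I^{(h)}\circ(\theta^{(h)})^{\lfloor t/h\rfloor}\circ\phi_P^{(h)}(\omega)+\frac{t-\lfloor t/h\rfloor h}{h}\,\phi_I^{(h)}\circ(\theta^{(h)})^{\lfloor t/h\rfloor+1}\circ\phi_P^{(h)}(\omega).\] Then for every $\omega\in\Omega$ and every $t\in\mathbb{R}_+$, \[\lim_{h\to0}D\big(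\theta_t(\omega),\overline{\theta}^{(h)}_t(\omega)\big)=0.\]
   Context: $|\cdot|$ is the Euclidean norm on $\mathbb{R}^d$; $(\theta^{(h)})^0$ is the identity. $\overline{\theta}^{(h)}_t$ is the second (environment) component of the time-interpolated embedding in $\mathbb{R}^m\times\Omega$ of a discrete-time repeated-interaction dynamical system with time step $h$. *)

theory Defs
  imports "HOL-Analysis.Analysis"
begin

text \<open>Paths \<omega> : R_+ \<rightarrow> R^d are represented as functions real \<Rightarrow> real^'d; only
  the values on [0,\<infinity>) matter.  The path space \<Omega> = C_0(R_+, R^d).\<close>

definition Omega :: "(real \<Rightarrow> real^'d) set" where
  "Omega = {\<omega>. continuous_on {0..} \<omega> \<and> \<omega> 0 = 0}"

definition supdist :: "nat \<Rightarrow> (real \<Rightarrow> real^'d) \<Rightarrow> (real \<Rightarrow> real^'d) \<Rightarrow> real" where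
  "supdist n \<omega> \<omega>' = (SUP t\<in>{0..real n}. norm (\<omega> t - \<omega>' t))"

definition D :: "(real \<Rightarrow> real^'d) \<Rightarrow> (real \<Rightarrow> real^'d) \<Rightarrow> real" where
  "D \<omega> \<omega>' = (\<Sum>n. (1 / 2 ^ (Suc n)) *
      (supdist (Suc n) \<omega> \<omega>' / (1 + supdist (Suc n) \<omega> \<omega>')))"

definition shift :: "real \<Rightarrow> (real \<Rightarrow> real^'d) \<Rightarrow> (real \<Rightarrow> real^'d)" where
  "shift t \<omega> = (\<lambda>s. \<omega> (t + s) - \<omega> t)"

text \<open>Sequences (y_n)_{n \<ge> 1} are represented as nat \<Rightarrow> real^'d; index 0 is unused
  (the convention y_0 = 0 is built into phiI).\<close>
definition phiP :: "real \<Rightarrow> (real \<Rightarrow> real^'d) \<Rightarrow> (nat \<Rightarrow> real^'d)" where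
  "phiP h \<omega> = (\<lambda>n. if n = 0 then 0 else \<omega> (real n * h) - \<omega> ((real n - 1) * h))"

definition phiI :: "real \<Rightarrow> (nat \<Rightarrow> real^'d) \<Rightarrow> (real \<Rightarrow> real^'d)" where
  "phiI h y = (\<lambda>t. let k = nat \<lfloor>t / h\<rfloor> in
      (\<Sum>n\<in>{1..k}. y n) + ((t - real k * h) / h) *\<^sub>R y (k + 1))"

definition seqshift :: "(nat \<Rightarrow> real^'d) \<Rightarrow> (nat \<Rightarrow> real^'d)" where
  "seqshift y = (\<lambda>n. y (n + 1))"

definition shift_bar :: "real \<Rightarrow> real \<Rightarrow> (real \<Rightarrow> real^'d) \<Rightarrow> (real \<Rightarrow> real^'d)" where
  "shift_bar h t \<omega> = (let k = nat \<lfloor>t / h\<rfloor> in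
      (\<lambda>s. (((real k + 1) * h - t) / h) *\<^sub>R phiI h ((seqshift ^^ k) (phiP h \<omega>)) s
         + ((t - real k * h) / h) *\<^sub>R phiI h ((seqshift ^^ (k + 1)) (phiP h \<omega>)) s))"

end

theory Submission
  imports Defs
begin

lemma seqshift_pow: "(seqshift ^^ k) y n = y (n + k)"
  by (induction k arbitrary: n) (simp_all add: seqshift_def)

lemma tele: "(\<Sum>n\<in>{1..j}. phiP h \<omega> (n + k)) = \<omega> (real (j+k) * h) - \<omega> (real k * h)"
proof (induction j)
  case 0 then show ?case by simp
next
  case (Suc j)
  have "(\<Sum>n\<in>{1..Suc j}. phiP h \<omega> (n + k)) = (\<Sum>n\<in>{1..j}. phiP h \<omega> (n + k)) + phiP h \<omega> (Suc j + k)"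
    by simp
  also have "phiP h \<omega> (Suc j + k) = \<omega> (real (Suc j + k) * h) - \<omega> (real (j + k) * h)"
    by (simp add: phiP_def)
  finally show ?case using Suc by simp
qed

lemma phiI_eq:
  "phiI h ((seqshift^^k) (phiP h \<omega>)) s =
    (let j = nat \<lfloor>s/h\<rfloor> in \<omega> (real (j+k) * h) - \<omega> (real k * h)
      + ((s - real j * h)/h) *\<^sub>R (\<omega> (real (j+k+1) * h) - \<omega> (real (j+k) * h)))"
proof -
  have e: "phiP h \<omega> (j + 1 + k) = \<omega> (real (j+k+1) * h) - \<omega> (real (j+k) * h)" for j
    by (simp add: phiP_def algebra_simps)
  show ?thesis unfolding phiI_def Let_def seqshift_pow tele e by simp
qed

lemma comb:
  fixes X Y A B C :: "'a::real_normed_vector"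
  assumes "0 \<le> f" "f \<le> 1" "norm (X - A) \<le> d" "norm (X - C) \<le> d" "norm (Y - B) \<le> d"
  shows "norm (X - Y - (A - B + f *\<^sub>R (C - A))) \<le> 2 * d"
proof -
  have "X - Y - (A - B + f *\<^sub>R (C - A)) = (1 - f) *\<^sub>R (X - A) + f *\<^sub>R (X - C) - (Y - B)"
    by (simp add: algebra_simps)
  also have "norm \<dots> \<le> norm ((1 - f) *\<^sub>R (X - A)) + norm (f *\<^sub>R (X - C)) + norm (Y - B)"
    by (meson norm_diff_ineq norm_triangle_ineq norm_triangle_ineq4 order_trans add_mono order_refl)
  also have "\<dots> \<le> (1-f) * d + f * d + d"
    using assms by (intro add_mono) (auto intro: mult_left_mono)
  finally show ?thesis by (simp add: algebra_simps)
qed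

lemma pw:
  fixes \<omega> :: "real \<Rightarrow> real^'d"
  assumes h: "h > 0" and s: "s \<ge> 0" and t: "t \<ge> 0"
    and del: "\<And>p q. 0 \<le> p \<Longrightarrow> p \<le> t+s+2*h \<Longrightarrow> 0 \<le> q \<Longrightarrow> q \<le> t+s+2*h \<Longrightarrow> \<bar>p-q\<bar> \<le> 2*h \<Longrightarrow> norm (\<omega> p - \<omega> q) \<le> d"
  shows "norm (shift t \<omega> s - shift_bar h t \<omega> s) \<le> 2 * d"
proof -
  define k where "k = nat \<lfloor>t/h\<rfloor>"
  define j where "j = nat \<lfloor>s/h\<rfloor>"
  define f where "f = (s - real j * h)/h"
  define a where "a = ((real k + 1) * h - t) / h"
  define b where "b = (t - real k * h) / h"
  have fk: "real k = of_int \<lfloor>t/h\<rfloor>" using t h by (simp add: k_def)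
  have fj: "real j = of_int \<lfloor>s/h\<rfloor>" using s h by (simp add: j_def)
  have k1: "real k * h \<le> t" using fk h by (metis floor_divide_lower)
  have k2: "t < real k * h + h" using fk h
    by (metis floor_divide_upper distrib_right mult_1 add.commute)
  have j1: "real j * h \<le> s" using fj h by (metis floor_divide_lower)
  have j2: "s < real j * h + h" using fj h
    by (metis floor_divide_upper distrib_right mult_1 add.commute)
  have f0: "0 \<le> f" "f \<le> 1" using j1 j2 h by (auto simp: f_def field_simps)
  have a0: "0 \<le> a" "0 \<le> b" "a + b = 1" using k1 k2 h by (auto simp: a_def b_def field_simps)
  define Q where "Q k' = \<omega> (real (j+k') * h) - \<omega> (real k' * h)
      + f *\<^sub>R (\<omega> (real (j+k'+1) * h) - \<omega> (real (j+k') * h))" for k'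
  have sb: "shift_bar h t \<omega> s = a *\<^sub>R Q k + b *\<^sub>R Q (k+1)"
    unfolding shift_bar_def phiI_eq Let_def Q_def f_def a_def b_def k_def[symmetric] j_def[symmetric]
    by simp
  have rj: "real (j+k) * h = real j * h + real k * h" "real (j+k+1) * h = real j * h + real k * h + h"
    "real (j+(k+1)) * h = real j * h + real k * h + h" "real (j+(k+1)+1) * h = real j * h + real k * h + 2*h"
    "real (k+1) * h = real k * h + h"
    by (simp_all add: algebra_simps)
  have nn: "0 \<le> real j * h" "0 \<le> real k * h" using h by auto
  have Qk: "norm (\<omega> (t+s) - \<omega> t - Q k) \<le> 2 * d"
    unfolding Q_def rj
    by (rule comb[OF f0]; rule del) (use k1 k2 j1 j2 nn h s t in auto)
  have Qk1: "norm (\<omega> (t+s) - \<omega> t - Q (k+1)) \<le> 2 * d"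
    unfolding Q_def rj
    by (rule comb[OF f0]; rule del) (use k1 k2 j1 j2 nn h s t in auto)
  have "shift t \<omega> s - shift_bar h t \<omega> s = a *\<^sub>R (\<omega> (t+s) - \<omega> t - Q k) + b *\<^sub>R (\<omega> (t+s) - \<omega> t - Q (k+1))"
  proof -
    have "\<omega> (t+s) - \<omega> t = (a + b) *\<^sub>R (\<omega> (t+s) - \<omega> t)" using a0 by simp
    then show ?thesis unfolding sb shift_def by (simp add: algebra_simps)
  qed
  also have "norm \<dots> \<le> a * (2*d) + b * (2*d)"
    using a0 Qk Qk1 by (intro norm_triangle_le add_mono) (auto intro: mult_left_mono)
  also have "\<dots> = 2 * d" using a0 by (simp add: algebra_simps flip: distrib_right)
  finally show ?thesis .
qed

lemma D_small:
  fixes x y :: "real \<Rightarrow> real^'d"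
  assumes bnd: "\<And>n. \<exists>B. \<forall>s\<in>{0..real n}. norm (x s - y s) \<le> B"
    and sm: "\<And>s. s \<in> {0..real N} \<Longrightarrow> norm (x s - y s) \<le> e" and e: "e \<ge> 0"
  shows "D x y \<le> e + (1/2)^N" "0 \<le> D x y"
proof -
  define sd where "sd n = supdist n x y" for n
  have sd0: "0 \<le> sd n" for n
  proof -
    obtain B where B: "\<forall>s\<in>{0..real n}. norm (x s - y s) \<le> B" using bnd by blast
    have "bdd_above ((\<lambda>s. norm (x s - y s)) ` {0..real n})"
      using B by (auto intro: bdd_aboveI2)
    then show ?thesis unfolding sd_def supdist_def
      by (rule cSUP_upper2[where x=0]) auto
  qed
  have sdN: "sd n \<le> e" if "n \<le> N" for n
    unfolding sd_def supdist_def
    by (rule cSUP_least) (use that sm in auto)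
  define tm where "tm n = (1 / 2 ^ (Suc n)) * (sd (Suc n) / (1 + sd (Suc n)))" for n
  define g where "g n = (if N \<le> n then (1/2::real)^Suc n else 0)" for n
  have gs: "g sums (1/2)^N"
  proof -
    have "(\<lambda>i. (1/2::real)^N * (1/2)^Suc i) sums ((1/2)^N * 1)"
      by (rule sums_mult[OF power_half_series])
    then have "(\<lambda>i. g (i + N)) sums (1/2)^N"
      by (simp add: g_def power_add mult.commute)
    then show ?thesis by (subst (asm) sums_zero_iff_shift) (auto simp: g_def)
  qed
  have hs: "(\<lambda>n. e * (1/2::real)^Suc n) sums (e * 1)"
    by (rule sums_mult[OF power_half_series])
  have tsum: "(\<lambda>n. e * (1/2::real)^Suc n + g n) sums (e + (1/2)^N)"
    using sums_add[OF hs gs] by simp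
  have t0: "0 \<le> tm n" for n using sd0[of "Suc n"] by (simp add: tm_def)
  have q1: "sd n / (1 + sd n) \<le> 1" for n using sd0[of n] by simp
  have q2: "sd n / (1 + sd n) \<le> sd n" for n using sd0[of n]
    by (simp add: divide_le_eq mult_le_cancel_left1 algebra_simps)
  have tle: "tm n \<le> e * (1/2::real)^Suc n + g n" for n
  proof (cases "N \<le> n")
    case True
    have "tm n \<le> (1/2)^Suc n * 1"
      unfolding tm_def power_one_over by (rule mult_left_mono[OF q1]) simp
    moreover have "0 \<le> e * (1/2::real)^Suc n" using e by simp
    ultimately show ?thesis using True by (simp add: g_def)
  next
    case False
    have "sd (Suc n) / (1 + sd (Suc n)) \<le> e" using q2[of "Suc n"] sdN[of "Suc n"] False by simp
    then have "tm n \<le> (1/2)^Suc n * e"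
      unfolding tm_def power_one_over by (rule mult_left_mono) simp
    then show ?thesis using False by (simp add: g_def mult.commute)
  qed
  have sumt: "summable tm"
    by (rule summable_comparison_test[OF _ sums_summable[OF tsum]]) (use t0 tle in auto)
  have "D x y = suminf tm" unfolding D_def tm_def sd_def ..
  also have "\<dots> \<le> e + (1/2)^N"
    using suminf_le[OF tle sumt sums_summable[OF tsum]] sums_unique[OF tsum] by simp
  finally show "D x y \<le> e + (1/2)^N" .
  show "0 \<le> D x y" using suminf_nonneg[OF sumt t0] unfolding D_def tm_def sd_def .
qed

lemma bounded_diff:
  fixes \<omega> :: "real \<Rightarrow> real^'d"
  assumes om: "\<omega> \<in> Omega" and t: "t \<ge> 0" and h: "h > 0"
  shows "\<exists>B. \<forall>s\<in>{0..real n}. norm (shift t \<omega> s - shift_bar h t \<omega> s) \<le> B"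
proof -
  have "continuous_on {0..t + real n + 2*h} \<omega>"
    using om by (auto simp: Omega_def elim: continuous_on_subset)
  then have "compact (\<omega> ` {0..t + real n + 2*h})" by (rule compact_continuous_image) simp
  then obtain M where M: "\<And>p. p \<in> {0..t + real n + 2*h} \<Longrightarrow> norm (\<omega> p) \<le> M"
    by (meson compact_imp_bounded bounded_iff imageI)
  show ?thesis
  proof (intro exI ballI)
    fix s assume s: "s \<in> {0..real n}"
    show "norm (shift t \<omega> s - shift_bar h t \<omega> s) \<le> 2 * (2 * M)"
    proof (rule pw[OF h _ t])
      show "0 \<le> s" using s by simp
      fix p q assume "0 \<le> p" "p \<le> t + s + 2 * h" "0 \<le> q" "q \<le> t + s + 2 * h"
      then have "norm (\<omega> p) \<le> M" "norm (\<omega> q) \<le> M" using s by (auto intro!: M)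
      then show "norm (\<omega> p - \<omega> q) \<le> 2 * M"
        by (smt (verit) norm_triangle_ineq4)
    qed
  qed
qed

lemma small_diff:
  fixes \<omega> :: "real \<Rightarrow> real^'d"
  assumes om: "\<omega> \<in> Omega" and t: "t \<ge> 0" and e: "e > 0"
  shows "\<exists>h0>0. \<forall>h. 0 < h \<and> h < h0 \<longrightarrow> (\<forall>s\<in>{0..T}. norm (shift t \<omega> s - shift_bar h t \<omega> s) \<le> e)"
proof -
  have "continuous_on {0..t + T + 2} \<omega>"
    using om by (auto simp: Omega_def elim: continuous_on_subset)
  then have "uniformly_continuous_on {0..t + T + 2} \<omega>"
    by (rule compact_uniformly_continuous) simp
  then obtain d where d: "d > 0"
    and dd: "\<And>p q. p \<in> {0..t+T+2} \<Longrightarrow> q \<in> {0..t+T+2} \<Longrightarrow> dist q p < d \<Longrightarrow> dist (\<omega> q) (\<omega> p) < e/2"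
    unfolding uniformly_continuous_on_def using e by (meson half_gt_zero)
  show ?thesis
  proof (intro exI[of _ "min 1 (d/3)"] conjI allI impI ballI)
    show "0 < min 1 (d/3)" using d by simp
    fix h s assume hh: "0 < h \<and> h < min 1 (d/3)" and s: "s \<in> {0..T}"
    have "norm (shift t \<omega> s - shift_bar h t \<omega> s) \<le> 2 * (e/2)"
    proof (rule pw[OF _ _ t])
      show "0 < h" "0 \<le> s" using hh s by auto
      fix p q assume pq: "0 \<le> p" "p \<le> t + s + 2 * h" "0 \<le> q" "q \<le> t + s + 2 * h" "\<bar>p - q\<bar> \<le> 2 * h"
      have "dist (\<omega> q) (\<omega> p) < e/2"
        by (rule dd) (use pq hh s in \<open>auto simp: dist_real_def\<close>)
      then show "norm (\<omega> p - \<omega> q) \<le> e/2" by (simp add: dist_norm norm_minus_commute)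
    qed
    then show "norm (shift t \<omega> s - shift_bar h t \<omega> s) \<le> e" by simp
  qed
qed

theorem theorem5p1:
  fixes \<omega> :: "real \<Rightarrow> real^'d" and t :: real
  assumes "\<omega> \<in> Omega" and "t \<ge> 0"
  shows "((\<lambda>h. D (shift t \<omega>) (shift_bar h t \<omega>)) \<longlongrightarrow> 0) (at_right 0)"
proof (rule tendstoI)
  fix \<epsilon> :: real assume ep: "\<epsilon> > 0"
  obtain N where N: "(1/2::real)^N < \<epsilon>/2"
    using real_arch_pow_inv[of "\<epsilon>/2" "1/2"] ep by auto
  obtain h0 where h0: "h0 > 0"
    and hh: "\<And>h. 0 < h \<and> h < h0 \<Longrightarrow> \<forall>s\<in>{0..real N}. norm (shift t \<omega> s - shift_bar h t \<omega> s) \<le> \<epsilon>/4"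
    using small_diff[OF assms, of "\<epsilon>/4" "real N"] ep by auto
  show "\<forall>\<^sub>F h in at_right 0. dist (D (shift t \<omega>) (shift_bar h t \<omega>)) 0 < \<epsilon>"
    unfolding eventually_at_right_field
  proof (intro exI[of _ h0] conjI allI impI)
    show "0 < h0" by fact
    fix h :: real assume h: "0 < h" "h < h0"
    have b: "\<And>n. \<exists>B. \<forall>s\<in>{0..real n}. norm (shift t \<omega> s - shift_bar h t \<omega> s) \<le> B"
      using bounded_diff[OF assms h(1)] by blast
    have s: "\<And>s. s \<in> {0..real N} \<Longrightarrow> norm (shift t \<omega> s - shift_bar h t \<omega> s) \<le> \<epsilon>/4"
      using hh h by blast
    note DS = D_small[OF b s] 
    have "D (shift t \<omega>) (shift_bar h t \<omega>) \<le> \<epsilon>/4 + (1/2)^N" "0 \<le> D (shift t \<omega>) (shift_bar h t \<omega>)"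
      using DS ep by auto
    then show "dist (D (shift t \<omega>) (shift_bar h t \<omega>)) 0 < \<epsilon>" using N ep by (simp add: dist_real_def)
  qed
qed

end
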